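(* For all positive integers $n,k$ and every probability distribution $P=(p_1,\dots,p_k)$ on $\{1,\dots,k\}$, it holds that $\|2nV_{n,k,P}\|_{\psi_1}\leq 4(k-1)$ and $\|2nV_{n,k,P}-\mathbb{E}[2nV_{n,k,P}]\|_{\psi_1}\leq 8(k-1)$. In particular, there exist universal constants $C_1,C_2>0$ such that for all $n$, $k$, $P$ and all real $m\geq 1$, \[ \mathbb{E}\big[(2nV_{n,k,P})^m\big]\leq (C_1m(k-1))^m,\qquad \mathbb{E}\big[(2nV_{n,k,P}-\mathbb{E}[2nV_{n,k,P}])^m\big]\leq (C_2m(k-1))^m. \]
   Context: $X=(X_1,\dots,X_k)$ is multinomially distributed with $n$ samples and probabilities $P$, and $V_{n,k,P}=D\big((X_1/n,\dots,X_k/n)\,\|\,(p_1,\dots,p_k)\big)$ where $D\big((q_i)_i\,\|\,(p_i)_i\big)=\sum_i q_i\log\frac{q_i}{p_i}$ is the Kullback--Leibler divergence (natural logarithm, convention $0\log(0/p)=0$). For a real random variable $Y$, the subexponential norm is $\|Y\|_{\psi_1}=\inf\{t>0:\mathbb{E}[\exp(|Y|/t)]\leq 2\}$. *)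

theory Defs
  imports "HOL-Analysis.Analysis"
begin

text \<open>Outcomes of a multinomial experiment with n samples and k categories
  (categories indexed 0..k-1): count vectors summing to n.\<close>
definition count_vecs :: "nat \<Rightarrow> nat \<Rightarrow> (nat \<Rightarrow> nat) set" where
  "count_vecs n k = {x \<in> {0..<k} \<rightarrow>\<^sub>E {0..n}. (\<Sum>i<k. x i) = n}"

definition multinomial_pmf :: "nat \<Rightarrow> nat \<Rightarrow> (nat \<Rightarrow> real) \<Rightarrow> (nat \<Rightarrow> nat) \<Rightarrow> real" where
  "multinomial_pmf n k p x = fact n / (\<Prod>i<k. fact (x i)) * (\<Prod>i<k. p i ^ x i)"

definition mult_expect :: "nat \<Rightarrow> nat \<Rightarrow> (nat \<Rightarrow> real) \<Rightarrow> ((nat \<Rightarrow> nat) \<Rightarrow> real) \<Rightarrow> real" where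
  "mult_expect n k p f = (\<Sum>x\<in>count_vecs n k. multinomial_pmf n k p x * f x)"

definition KL_div :: "nat \<Rightarrow> (nat \<Rightarrow> real) \<Rightarrow> (nat \<Rightarrow> real) \<Rightarrow> real" where
  "KL_div k q p = (\<Sum>i<k. if q i = 0 then 0 else q i * ln (q i / p i))"

definition V_stat :: "nat \<Rightarrow> nat \<Rightarrow> (nat \<Rightarrow> real) \<Rightarrow> (nat \<Rightarrow> nat) \<Rightarrow> real" where
  "V_stat n k p x = KL_div k (\<lambda>i. real (x i) / real n) p"

definition psi1_norm :: "nat \<Rightarrow> nat \<Rightarrow> (nat \<Rightarrow> real) \<Rightarrow> ((nat \<Rightarrow> nat) \<Rightarrow> real) \<Rightarrow> real" where
  "psi1_norm n k p Y = Inf {t. t > 0 \<and> mult_expect n k p (\<lambda>x. exp (\<bar>Y x\<bar> / t)) \<le> 2}"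

definition prob_vec :: "nat \<Rightarrow> (nat \<Rightarrow> real) \<Rightarrow> bool" where
  "prob_vec k p \<longleftrightarrow> (\<forall>i<k. p i \<ge> 0) \<and> (\<Sum>i<k. p i) = 1"

end

theory Submission
  imports Defs
begin
lemma alt_pascal:
  fixes a :: "nat \<Rightarrow> real"
  shows "(\<Sum>k\<le>Suc n. (-1)^k * real (Suc n choose k) * a k)
       = (\<Sum>k\<le>n. (-1)^k * real (n choose k) * a k) - (\<Sum>k\<le>n. (-1)^k * real (n choose k) * a (Suc k))"
proof -
  have "(\<Sum>k\<le>Suc n. (-1)^k * real (Suc n choose k) * a k)
      = a 0 + (\<Sum>k\<le>n. (-1)^(Suc k) * real (Suc n choose Suc k) * a (Suc k))"
    by (subst sum.atMost_Suc_shift) simp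
  also have "\<dots> = a 0 + (\<Sum>k\<le>n. (-1)^(Suc k) * real (n choose Suc k) * a (Suc k))
                 - (\<Sum>k\<le>n. (-1)^k * real (n choose k) * a (Suc k))"
    by (simp add: sum.distrib sum_subtractf algebra_simps sum_negf)
  also have "a 0 + (\<Sum>k\<le>n. (-1)^(Suc k) * real (n choose Suc k) * a (Suc k))
           = (\<Sum>k\<le>Suc n. (-1)^k * real (n choose k) * a k)"
    by (subst sum.atMost_Suc_shift) simp
  also have "\<dots> = (\<Sum>k\<le>n. (-1)^k * real (n choose k) * a k)"
    by simp
  finally show ?thesis .
qed

definition D :: "nat \<Rightarrow> nat \<Rightarrow> real \<Rightarrow> real" where
  "D n m x = (\<Sum>k\<le>n. (-1)^k * real (n choose k) * (x + real k)^m)"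

lemma D_Suc: "D (Suc n) m x = D n m x - D n m (x+1)"
  unfolding D_def by (subst alt_pascal) (simp add: algebra_simps)

lemma D_diff: "D n m (x+1) - D n m x = (\<Sum>i<m. real (m choose i) * D n i x)"
proof -
  have "D n m (x+1) - D n m x = (\<Sum>k\<le>n. (-1)^k * real (n choose k) * ((x + real k + 1)^m - (x + real k)^m))"
    unfolding D_def by (simp add: sum_subtractf algebra_simps)
  also have "\<dots> = (\<Sum>k\<le>n. (-1)^k * real (n choose k) * (\<Sum>i<m. real (m choose i) * (x + real k)^i))"
  proof (rule sum.cong[OF refl])
    fix k
    have "(x + real k + 1)^m = (\<Sum>i\<le>m. real (m choose i) * (x + real k)^i)"
      using binomial_ring[of "x + real k" 1 m] by (simp add: mult.commute)
    also have "\<dots> = (\<Sum>i<m. real (m choose i) * (x + real k)^i) + (x + real k)^m"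
      by (simp add: lessThan_Suc_atMost[symmetric])
    finally show "(-1)^k * real (n choose k) * ((x + real k + 1)^m - (x + real k)^m)
        = (-1)^k * real (n choose k) * (\<Sum>i<m. real (m choose i) * (x + real k)^i)" by simp
  qed
  also have "\<dots> = (\<Sum>i<m. real (m choose i) * D n i x)"
    unfolding D_def by (simp add: sum_distrib_left sum_distrib_right algebra_simps sum.swap[of _ "{..n}"])
  finally show ?thesis .
qed

lemma D_vals: "(\<forall>m x. m < n \<longrightarrow> D n m x = 0) \<and> (\<forall>x. D n n x = (-1)^n * fact n)"
proof (induction n)
  case 0
  then show ?case by (simp add: D_def)
next
  case (Suc n)
  have A: "D (Suc n) m x = - (\<Sum>i<m. real (m choose i) * D n i x)" for m x
    using D_Suc[of n m x] D_diff[of n m x] by simp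
  show ?case
  proof safe
    fix m x assume "m < Suc n"
    then have "\<forall>i<m. D n i x = 0" using Suc.IH by auto
    then show "D (Suc n) m x = 0" by (simp add: A)
  next
    fix x
    have "(\<Sum>i<Suc n. real (Suc n choose i) * D n i x) = real (Suc n choose n) * D n n x"
      using Suc.IH by (simp add: lessThan_Suc)
    then show "D (Suc n) (Suc n) x = (-1)^Suc n * fact (Suc n)"
      using Suc.IH by (simp add: A algebra_simps)
  qed
qed

definition fA :: "nat \<Rightarrow> real \<Rightarrow> real \<Rightarrow> real" where
  "fA n x y = (\<Sum>k\<le>n. real (n choose k) * (x + real k)^k * (y + real (n-k))^(n-k))"

definition gA :: "nat \<Rightarrow> real \<Rightarrow> real" where
  "gA n s = (\<Sum>k\<le>n. real (n choose k) * fact k * s^(n-k))"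

lemma absorb_real: "real (Suc n - k) * real (Suc n choose k) = real (Suc n) * real (n choose k)"
  using binomial_absorb_comp[of "Suc n" k] by (metis diff_Suc_1 of_nat_mult)

lemma pow_shift_deriv: "((\<lambda>y. (y + c)^m) has_real_derivative (real m * (y + c)^(m - 1))) (at y)"
proof -
  have "((\<lambda>y. (y + c)^m) has_real_derivative (real m * (y + c)^(m - Suc 0) * 1)) (at y)"
    by (rule DERIV_chain2[OF DERIV_pow]) (auto intro!: derivative_eq_intros)
  then show ?thesis by simp
qed

lemma pow_deriv': "((\<lambda>s. s^m) has_real_derivative (real m * s^(m - 1))) (at s)"
  using DERIV_pow[of m s] by simp

lemma fA_deriv: "((\<lambda>y. fA (Suc n) x y) has_real_derivative (real (Suc n) * fA n x (y+1))) (at y)"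
proof -
  have "((\<lambda>y. fA (Suc n) x y) has_real_derivative
     (\<Sum>k\<le>Suc n. real (Suc n choose k) * (x + real k)^k * (real (Suc n - k) * (y + real (Suc n-k))^(Suc n - k - 1)))) (at y)"
    unfolding fA_def
    by (intro DERIV_sum DERIV_cmult pow_shift_deriv)
  moreover have "(\<Sum>k\<le>Suc n. real (Suc n choose k) * (x + real k)^k * (real (Suc n - k) * (y + real (Suc n-k))^(Suc n - k - 1)))
     = (\<Sum>k\<le>n. real (Suc n) * (real (n choose k) * (x + real k)^k * ((y+1) + real (n-k))^(n-k)))"
  proof -
    have "(\<Sum>k\<le>Suc n. real (Suc n choose k) * (x + real k)^k * (real (Suc n - k) * (y + real (Suc n-k))^(Suc n - k - 1)))
       = (\<Sum>k\<le>n. real (Suc n choose k) * (x + real k)^k * (real (Suc n - k) * (y + real (Suc n-k))^(Suc n - k - 1)))"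
      by simp
    also have "\<dots> = (\<Sum>k\<le>n. real (Suc n) * (real (n choose k) * (x + real k)^k * ((y+1) + real (n-k))^(n-k)))"
    proof (rule sum.cong[OF refl])
      fix k assume "k \<in> {..n}"
      then have k: "k \<le> n" by simp
      have e1: "Suc n - k - 1 = n - k" by simp
      have e2: "y + real (Suc n - k) = (y+1) + real (n-k)" using k by (simp add: of_nat_diff)
      show "real (Suc n choose k) * (x + real k)^k * (real (Suc n - k) * (y + real (Suc n-k))^(Suc n - k - 1))
          = real (Suc n) * (real (n choose k) * (x + real k)^k * ((y+1) + real (n-k))^(n-k))"
      proof -
        have "real (Suc n choose k) * (x + real k)^k * (real (Suc n - k) * ((y+1) + real (n-k))^(n-k))
            = (real (Suc n - k) * real (Suc n choose k)) * ((x + real k)^k * ((y+1) + real (n-k))^(n-k))"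
          by (simp add: mult_ac)
        then show ?thesis unfolding e1 e2 absorb_real by (simp add: mult_ac)
      qed
    qed
    finally show ?thesis .
  qed
  ultimately show ?thesis unfolding fA_def by (simp add: sum_distrib_left)
qed

lemma gA_deriv: "((\<lambda>s. gA (Suc n) s) has_real_derivative (real (Suc n) * gA n s)) (at s)"
proof -
  have "((\<lambda>s. gA (Suc n) s) has_real_derivative
     (\<Sum>k\<le>Suc n. real (Suc n choose k) * fact k * (real (Suc n - k) * s^(Suc n - k - 1)))) (at s)"
    unfolding gA_def
    by (intro DERIV_sum DERIV_cmult pow_deriv')
  moreover have "(\<Sum>k\<le>Suc n. real (Suc n choose k) * fact k * (real (Suc n - k) * s^(Suc n - k - 1)))
     = (\<Sum>k\<le>n. real (Suc n) * (real (n choose k) * fact k * s^(n-k)))"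
  proof -
    have "(\<Sum>k\<le>Suc n. real (Suc n choose k) * fact k * (real (Suc n - k) * s^(Suc n - k - 1)))
       = (\<Sum>k\<le>n. real (Suc n choose k) * fact k * (real (Suc n - k) * s^(Suc n - k - 1)))"
      by simp
    also have "\<dots> = (\<Sum>k\<le>n. real (Suc n) * (real (n choose k) * fact k * s^(n-k)))"
    proof (rule sum.cong[OF refl])
      fix k assume "k \<in> {..n}"
      have e1: "Suc n - k - 1 = n - k" by simp
      show "real (Suc n choose k) * fact k * (real (Suc n - k) * s^(Suc n - k - 1))
          = real (Suc n) * (real (n choose k) * fact k * s^(n-k))"
      proof -
        have "real (Suc n choose k) * fact k * (real (Suc n - k) * s^(n-k))
            = (real (Suc n - k) * real (Suc n choose k)) * (fact k * s^(n-k))"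
          by (simp add: mult_ac)
        then show ?thesis unfolding e1 absorb_real by (simp add: mult_ac)
      qed
    qed
    finally show ?thesis .
  qed
  ultimately show ?thesis unfolding gA_def by (simp add: sum_distrib_left)
qed

lemma l1: "k \<le> N \<Longrightarrow> (x + real k)^k * (- (x + real k))^(N-k) = (-1)^(N-k) * (x + real k)^N"
    proof -
      assume k: "k \<le> N"
      have 1: "(x + real k)^k * (x + real k)^(N-k) = (x + real k)^N" using k by (simp flip: power_add)
      have 2: "(- (x + real k))^(N-k) = (-1)^(N-k) * (x + real k)^(N-k)" by (rule power_minus)
      show ?thesis unfolding 2 1[symmetric] by (rule mult.left_commute)
    qed
lemma l2: "k \<le> N \<Longrightarrow> real (N choose k) * (x + real k)^k * (- x - real N + real (N - k))^(N-k)
        = (-1)^N * ((-1)^k * real (N choose k) * (x + real k)^N)"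
proof -
  assume k: "k \<le> N"
    have e: "- x - real N + real (N - k) = - (x + real k)" using k by (simp add: of_nat_diff)
    have s: "(-1::real)^(N-k) = (-1)^N * (-1)^k"
      using k by (simp add: minus_one_power_iff)
  show ?thesis unfolding e mult.assoc l1[OF k] s by (simp only: mult_ac)
qed
lemma fA_special: "fA N x (- x - real N) = fact N"
proof -
  have "fA N x (- x - real N) = (\<Sum>k\<le>N. (-1)^N * ((-1)^k * real (N choose k) * (x + real k)^N))"
    unfolding fA_def by (rule sum.cong[OF refl]) (rule l2, simp)
  also have "\<dots> = (-1)^N * D N N x" unfolding D_def by (simp add: sum_distrib_left)
  also have "\<dots> = fact N" using D_vals[of N] by simp
  finally show ?thesis .
qed

lemma gA_zero: "gA N 0 = fact N"
proof -
  have "gA N 0 = (\<Sum>k\<le>N. if k = N then fact N else 0)"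
    unfolding gA_def by (rule sum.cong) auto
  then show ?thesis by simp
qed

lemma abel: "fA n x y = gA n (x + y + real n)"
proof (induction n arbitrary: x y)
  case 0
  then show ?case by (simp add: fA_def gA_def)
next
  case (Suc n)
  define h where "h y = fA (Suc n) x y - gA (Suc n) (x + y + real (Suc n))" for y
  have "DERIV h y :> 0" for y
  proof -
    have "((\<lambda>y. gA (Suc n) (x + y + real (Suc n))) has_real_derivative (real (Suc n) * gA n (x + y + real (Suc n)) * 1)) (at y)"
      by (rule DERIV_chain2[OF gA_deriv]) (auto intro!: derivative_eq_intros)
    from DERIV_diff[OF fA_deriv this]
    have "DERIV h y :> (real (Suc n) * fA n x (y+1) - real (Suc n) * gA n (x + y + real (Suc n)) * 1)"
      unfolding h_def .
    moreover have "fA n x (y+1) = gA n (x + y + real (Suc n))" using Suc.IH[of x "y+1"] by (simp add: algebra_simps)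
    ultimately show ?thesis by simp
  qed
  then have "h y = h (- x - real (Suc n))" by (intro DERIV_isconst_all) auto
  also have "\<dots> = 0" unfolding h_def using fA_special[of "Suc n" x] gA_zero[of "Suc n"] by simp
  finally show ?case unfolding h_def by simp
qed

definition T0 :: "nat \<Rightarrow> real \<Rightarrow> nat \<Rightarrow> real" where
  "T0 n r j = (if j = 0 then 0 else real j * ln (real j / (real n * r)))
            + (if n - j = 0 then 0 else real (n-j) * ln (real (n-j) / (real n * (1 - r))))"

lemma half_term:
  assumes a: "0 \<le> a" and jn: "j \<le> n"
  shows "a^j * exp ((if j = 0 then 0 else real j * ln (real j / (real n * a))) / 2)
         \<le> ((real n * a + real j) / (2 * real n))^j"
proof (cases "j = 0 \<or> a = 0")
  case True
  then show ?thesis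
  proof
    assume "j = 0" then show ?thesis by simp
  next
    assume "a = 0"
    moreover have "0 \<le> ((real n * a + real j) / (2 * real n))^j" using a by simp
    ultimately show ?thesis by (cases j) auto
  qed
next
  case False
  then have j: "j > 0" and ap: "a > 0" using a by auto
  then have n: "n > 0" using jn by simp
  define z where "z = real j / (real n * a)"
  have z: "z > 0" unfolding z_def using j ap n by simp
  have "exp (real j * ln z / 2) = exp (ln z / 2) ^ j"
    by (metis exp_of_nat_mult times_divide_eq_right)
  also have "exp (ln z / 2) = sqrt z"
    using z by (simp add: powr_half_sqrt[symmetric] powr_def)
  finally have 1: "a^j * exp (real j * ln z / 2) = (a * sqrt z)^j"
    by (simp add: power_mult_distrib)
  have az: "a^2 * z = a * (real j / real n)" using ap n unfolding z_def by (simp add: power2_eq_square field_simps)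
  have "a * sqrt z = sqrt (a^2) * sqrt z" using ap by simp
  also have "\<dots> = sqrt (a^2 * z)" by (simp add: real_sqrt_mult)
  also have "\<dots> = sqrt (a * (real j / real n))" by (simp only: az)
  also have "\<dots> \<le> (a + real j / real n) / 2"
    by (rule arith_geo_mean_sqrt) (use ap in auto)
  also have "\<dots> = (real n * a + real j) / (2 * real n)" using n by (simp add: field_simps)
  finally have 2: "a * sqrt z \<le> (real n * a + real j) / (2 * real n)" .
  have "(a * sqrt z)^j \<le> ((real n * a + real j) / (2 * real n))^j"
    by (rule power_mono[OF 2]) (use ap z in simp)
  then show ?thesis using 1 j unfolding z_def by simp
qed

lemma gA_bound: "gA n (2 * real n) \<le> 2 * (2 * real n)^n"
proof -
  have "gA n (2 * real n) \<le> (\<Sum>k\<le>n. (2 * real n)^n * (1/2)^k)"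
    unfolding gA_def
  proof (rule sum_mono)
    fix k assume "k \<in> {..n}"
    then have k: "k \<le> n" by simp
    have "real (n choose k) * fact k \<le> real n ^ k"
      using binomial_fact_pow[of n k] by (metis of_nat_fact of_nat_le_iff of_nat_mult of_nat_power)
    then have "real (n choose k) * fact k * (2 * real n)^(n-k) \<le> real n ^ k * (2 * real n)^(n-k)"
      by (rule mult_right_mono) simp
    also have "real n ^ k * (2 * real n)^(n-k) = (2 * real n)^n * (1/2)^k"
    proof -
      have "(2 * real n)^n = (2 * real n)^k * (2 * real n)^(n-k)" using k by (metis le_add_diff_inverse power_add)
      then show ?thesis by (simp add: power_mult_distrib field_simps)
    qed
    finally show "real (n choose k) * fact k * (2 * real n)^(n-k) \<le> (2 * real n)^n * (1/2)^k" .
  qed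
  also have "\<dots> = (2 * real n)^n * (\<Sum>k<Suc n. (1/2)^k)"
    by (simp add: sum_distrib_left lessThan_Suc_atMost)
  also have "(\<Sum>k<Suc n. (1/2::real)^k) \<le> 2"
    by (subst geometric_sum) (auto simp: field_simps)
  then have "(2 * real n)^n * (\<Sum>k<Suc n. (1/2::real)^k) \<le> (2 * real n)^n * 2"
    by (rule mult_left_mono) simp
  finally show ?thesis by simp
qed

lemma binom_mgf:
  assumes r: "0 \<le> r" "r \<le> 1"
  shows "(\<Sum>j\<le>n. real (n choose j) * r^j * (1-r)^(n-j) * exp (T0 n r j / 2)) \<le> 2"
proof (cases "n = 0")
  case True
  then show ?thesis by (simp add: T0_def)
next
  case False
  then have n: "n > 0" by simp
  have "(\<Sum>j\<le>n. real (n choose j) * r^j * (1-r)^(n-j) * exp (T0 n r j / 2))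
     \<le> (\<Sum>j\<le>n. real (n choose j) * ((real n * r + real j) / (2 * real n))^j
                  * ((real n * (1-r) + real (n-j)) / (2 * real n))^(n-j))"
  proof (rule sum_mono)
    fix j assume "j \<in> {..n}"
    then have j: "j \<le> n" by simp
    have e: "exp (T0 n r j / 2) = exp ((if j = 0 then 0 else real j * ln (real j / (real n * r))) / 2)
        * exp ((if n - j = 0 then 0 else real (n-j) * ln (real (n-j) / (real n * (1 - r)))) / 2)"
      unfolding T0_def by (simp add: add_divide_distrib exp_add)
    note h1 = half_term[OF r(1) j]
    note h2 = half_term[of "1-r" "n-j" n]
    have "r^j * (1-r)^(n-j) * exp (T0 n r j / 2)
       = (r^j * exp ((if j = 0 then 0 else real j * ln (real j / (real n * r))) / 2))
       * ((1-r)^(n-j) * exp ((if n - j = 0 then 0 else real (n-j) * ln (real (n-j) / (real n * (1 - r)))) / 2))"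
      unfolding e by (simp add: mult_ac)
    also have "\<dots> \<le> ((real n * r + real j) / (2 * real n))^j * ((real n * (1-r) + real (n-j)) / (2 * real n))^(n-j)"
      by (rule mult_mono[OF h1 h2]) (use r in auto)
    finally show "real (n choose j) * r^j * (1-r)^(n-j) * exp (T0 n r j / 2)
       \<le> real (n choose j) * ((real n * r + real j) / (2 * real n))^j
                  * ((real n * (1-r) + real (n-j)) / (2 * real n))^(n-j)"
      by (simp add: mult.assoc mult_left_mono)
  qed
  also have "\<dots> = fA n (real n * r) (real n * (1-r)) / (2 * real n)^n"
    unfolding fA_def sum_divide_distrib
  proof (rule sum.cong[OF refl])
    fix j assume "j \<in> {..n}"
    then have j: "j \<le> n" by simp
    have "(2 * real n)^n = (2 * real n)^j * (2 * real n)^(n-j)" using j by (metis le_add_diff_inverse power_add)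
    then show "real (n choose j) * ((real n * r + real j) / (2 * real n))^j
                  * ((real n * (1-r) + real (n-j)) / (2 * real n))^(n-j)
         = real (n choose j) * (real n * r + real j)^j * (real n * (1-r) + real (n-j))^(n-j) / (2 * real n)^n"
      by (simp add: power_divide)
  qed
  also have "\<dots> = gA n (2 * real n) / (2 * real n)^n"
    by (simp add: abel algebra_simps)
  also have "\<dots> \<le> 2"
    using gA_bound[of n] n by (simp add: divide_le_eq)
  finally show ?thesis .
qed

lemma finite_cv: "finite (count_vecs n k)"
  unfolding count_vecs_def by (rule finite_subset[OF _ finite_PiE[of "{0..<k}" "\<lambda>_. {0..n}"]]) auto

lemma cv_mem: "x \<in> count_vecs n k \<longleftrightarrow> x \<in> {0..<k} \<rightarrow>\<^sub>E {0..n} \<and> (\<Sum>i<k. x i) = n"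
  unfolding count_vecs_def by simp

lemma cv_le: "x \<in> count_vecs n k \<Longrightarrow> i < k \<Longrightarrow> x i \<le> n"
  unfolding count_vecs_def by (auto simp: PiE_iff)

lemma cv_out: "x \<in> count_vecs n k \<Longrightarrow> i \<ge> k \<Longrightarrow> x i = undefined"
  unfolding count_vecs_def by (auto simp: PiE_iff extensional_def)

lemma cv_Suc_image:
  "count_vecs n (Suc k) = (\<lambda>(j, x'). x'(k := j)) ` (SIGMA j:{..n}. count_vecs (n-j) k)"
proof (intro equalityI subsetI)
  fix x assume x: "x \<in> count_vecs n (Suc k)"
  define x' where "x' = x(k := undefined)"
  have sx: "(\<Sum>i<Suc k. x i) = n" using x by (simp add: cv_mem)
  have s': "(\<Sum>i<k. x' i) = (\<Sum>i<k. x i)" unfolding x'_def by (rule sum.cong) auto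
  have sk: "(\<Sum>i<k. x i) + x k = n" using sx by simp
  have "x' \<in> count_vecs (n - x k) k"
  proof -
    have "x' i \<le> n - x k" if "i < k" for i
    proof -
      have "x i \<le> (\<Sum>i<k. x i)" using that by (intro member_le_sum) auto
      then show ?thesis using sk that unfolding x'_def by simp
    qed
    moreover have "x' i = undefined" if "i \<notin> {0..<k}" for i
      using that cv_out[OF x, of i] unfolding x'_def by (cases "i = k") auto
    ultimately show ?thesis unfolding cv_mem using s' sk
      by (auto simp: PiE_iff extensional_def)
  qed
  moreover have "x k \<le> n" using cv_le[OF x, of k] by simp
  moreover have "x = x'(k := x k)" unfolding x'_def by simp
  ultimately show "x \<in> (\<lambda>(j, x'). x'(k := j)) ` (SIGMA j:{..n}. count_vecs (n-j) k)"
    by (intro image_eqI[where x="(x k, x')"]) auto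
next
  fix x assume "x \<in> (\<lambda>(j, x'). x'(k := j)) ` (SIGMA j:{..n}. count_vecs (n-j) k)"
  then obtain j x' where j: "j \<le> n" and x': "x' \<in> count_vecs (n-j) k" and x: "x = x'(k := j)"
    by auto
  have "(\<Sum>i<Suc k. x i) = (\<Sum>i<k. x' i) + j"
    unfolding x by (simp add: lessThan_Suc)
  also have "\<dots> = n" using x' j by (simp add: cv_mem)
  finally have s: "(\<Sum>i<Suc k. x i) = n" .
  have "x i \<le> n" if "i < Suc k" for i
    using that cv_le[OF x', of i] j unfolding x by (cases "i = k") auto
  moreover have "x i = undefined" if "i \<ge> Suc k" for i
    using that cv_out[OF x', of i] unfolding x by auto
  ultimately show "x \<in> count_vecs n (Suc k)" unfolding cv_mem using s
    by (auto simp: PiE_iff extensional_def)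
qed

lemma cv_Suc_inj: "inj_on (\<lambda>(j, x'). x'(k := j)) (SIGMA j:{..n}. count_vecs (n-j) k)"
proof (rule inj_onI, clarify)
  fix j x' j' y'
  assume x': "x' \<in> count_vecs (n-j) k" and y': "y' \<in> count_vecs (n-j') k"
    and eq: "x'(k := j) = y'(k := j')"
  have "j = j'" using fun_cong[OF eq, of k] by simp
  moreover have "x' = y'"
  proof
    fix i show "x' i = y' i"
      using fun_cong[OF eq, of i] cv_out[OF x', of k] cv_out[OF y', of k] by (cases "i = k") auto
  qed
  ultimately show "j = j' \<and> x' = y'" by simp
qed

lemma cv_Suc_sum:
  "(\<Sum>x\<in>count_vecs n (Suc k). F x) = (\<Sum>j\<le>n. \<Sum>x'\<in>count_vecs (n-j) k. F (x'(k := j)))"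
proof -
  have "(\<Sum>x\<in>count_vecs n (Suc k). F x) = (\<Sum>z\<in>(SIGMA j:{..n}. count_vecs (n-j) k). F ((\<lambda>(j, x'). x'(k := j)) z))"
    unfolding cv_Suc_image by (rule sum.reindex[OF cv_Suc_inj, unfolded comp_def])
  also have "\<dots> = (\<Sum>j\<le>n. \<Sum>x'\<in>count_vecs (n-j) k. F (x'(k := j)))"
    by (subst sum.Sigma) (auto simp: finite_cv split_def)
  finally show ?thesis .
qed

lemma pmf_Suc:
  assumes j: "j \<le> n" and x': "x' \<in> count_vecs (n-j) k"
  shows "multinomial_pmf n (Suc k) p (x'(k := j)) = real (n choose j) * p k ^ j * multinomial_pmf (n-j) k p x'"
proof -
  have 1: "(\<Prod>i<Suc k. fact ((x'(k := j)) i) :: real) = (\<Prod>i<k. fact (x' i)) * fact j"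
    by (simp add: lessThan_Suc)
  have 2: "(\<Prod>i<Suc k. p i ^ (x'(k := j)) i) = (\<Prod>i<k. p i ^ x' i) * p k ^ j"
    by (simp add: lessThan_Suc)
  have A: "(\<Prod>i<k. fact (x' i) :: real) \<noteq> 0" by simp
  show ?thesis
    unfolding multinomial_pmf_def 1 2 binomial_fact[OF j]
    using A by (simp add: field_simps)
qed

lemma cv_zero: "count_vecs 0 k = {(\<lambda>i. if i < k then 0 else undefined)}"
proof (intro equalityI subsetI)
  fix x assume x: "x \<in> count_vecs 0 k"
  show "x \<in> {(\<lambda>i. if i < k then 0 else undefined)}"
    using cv_le[OF x] cv_out[OF x] by (auto intro!: ext simp: not_less)
next
  fix x :: "nat \<Rightarrow> nat" assume "x \<in> {(\<lambda>i. if i < k then 0 else undefined)}"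
  then show "x \<in> count_vecs 0 k" unfolding cv_mem by (auto simp: PiE_iff extensional_def)
qed

lemma cv_0: "count_vecs n 0 = (if n = 0 then {\<lambda>_. undefined} else {})"
  unfolding count_vecs_def by auto

lemma mass: "(\<Sum>x\<in>count_vecs n k. multinomial_pmf n k p x) = (\<Sum>i<k. p i)^n"
proof (induction k arbitrary: n)
  case 0
  then show ?case by (simp add: cv_0 multinomial_pmf_def)
next
  case (Suc k)
  have "(\<Sum>x\<in>count_vecs n (Suc k). multinomial_pmf n (Suc k) p x)
      = (\<Sum>j\<le>n. \<Sum>x'\<in>count_vecs (n-j) k. real (n choose j) * p k ^ j * multinomial_pmf (n-j) k p x')"
    unfolding cv_Suc_sum by (intro sum.cong refl) (simp add: pmf_Suc)
  also have "\<dots> = (\<Sum>j\<le>n. real (n choose j) * p k ^ j * (\<Sum>i<k. p i)^(n-j))"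
    by (simp add: sum_distrib_left[symmetric] Suc.IH)
  also have "\<dots> = (p k + (\<Sum>i<k. p i))^n"
    by (simp add: binomial_ring)
  also have "\<dots> = (\<Sum>i<Suc k. p i)^n" by (simp add: add.commute)
  finally show ?case .
qed

lemma exp_conv:
  fixes a b u v :: real
  assumes "0 \<le> a" "0 \<le> b" "a + b = 1"
  shows "exp (a * u + b * v) \<le> a * exp u + b * exp v"
proof -
  have "exp ((1 - b) *\<^sub>R u + b *\<^sub>R v) \<le> (1 - b) * exp u + b * exp v"
    by (rule convex_onD[OF exp_convex]) (use assms in auto)
  moreover have "1 - b = a" using assms by simp
  ultimately show ?thesis by simp
qed

lemma nV_sum:
  assumes "N > 0"
  shows "real N * V_stat N K p x = (\<Sum>i<K. if x i = 0 then 0 else real (x i) * ln (real (x i) / (real N * p i)))"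
  unfolding V_stat_def KL_div_def sum_distrib_left
  by (rule sum.cong) (use assms in auto)

lemma pmf_nonzero:
  assumes "multinomial_pmf n k p x \<noteq> 0" "i < k" "x i \<noteq> 0"
  shows "p i \<noteq> 0"
proof
  assume "p i = 0"
  then have "(\<Prod>i<k. p i ^ x i) = 0" using assms(2,3) by (intro prod_zero) auto
  then show False using assms(1) unfolding multinomial_pmf_def by simp
qed

lemma pmf_nonneg:
  assumes "\<forall>i<k. p i \<ge> 0"
  shows "multinomial_pmf n k p x \<ge> 0"
  unfolding multinomial_pmf_def using assms by (auto intro!: mult_nonneg_nonneg prod_nonneg divide_nonneg_nonneg)

lemma pmf_scale:
  assumes x: "x \<in> count_vecs m k" and c: "c \<noteq> 0"
  shows "multinomial_pmf m k p x = c^m * multinomial_pmf m k (\<lambda>i. p i / c) x"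
proof -
  have "(\<Prod>i<k. p i ^ x i) = (\<Prod>i<k. c ^ x i * (p i / c) ^ x i)"
    by (rule prod.cong) (use c in \<open>auto simp: power_mult_distrib[symmetric]\<close>)
  also have "\<dots> = c ^ (\<Sum>i<k. x i) * (\<Prod>i<k. (p i / c) ^ x i)"
    by (simp add: prod.distrib power_sum)
  also have "(\<Sum>i<k. x i) = m" using x by (simp add: cv_mem)
  finally show ?thesis unfolding multinomial_pmf_def by (simp add: mult_ac)
qed

lemma sum_lessThan_mult: "(\<Sum>i<k. if x i = 0 then 0 else real (x i) * c) = c * real (\<Sum>i<k. x i)"
  by (simp add: sum_distrib_left mult.commute) (rule sum.cong, auto)

lemma chain:
  assumes pv: "prob_vec (Suc k) p" and n: "n > 0" and j: "j \<le> n"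
    and x': "x' \<in> count_vecs (n-j) k"
    and nz: "multinomial_pmf n (Suc k) p (x'(k := j)) \<noteq> 0"
  shows "real n * V_stat n (Suc k) p (x'(k := j))
       = T0 n (p k) j + real (n-j) * V_stat (n-j) k (\<lambda>i. p i / (1 - p k)) x'"
proof -
  define m where "m = n - j"
  have pnn: "\<forall>i<Suc k. p i \<ge> 0" and ps: "(\<Sum>i<Suc k. p i) = 1" using pv by (auto simp: prob_vec_def)
  have psk: "(\<Sum>i<k. p i) = 1 - p k" using ps by simp
  have supp: "p i > 0" if "i < k" "x' i \<noteq> 0" for i
  proof -
    have "p i \<noteq> 0" using pmf_nonzero[OF nz, of i] that by simp
    moreover have "p i \<ge> 0" using pnn that by simp
    ultimately show ?thesis by simp
  qed
  have gk: "(if (x'(k := j)) k = 0 then 0 else real ((x'(k := j)) k) * ln (real ((x'(k := j)) k) / (real n * p k)))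
      = (if j = 0 then 0 else real j * ln (real j / (real n * p k)))" by simp
  have L: "real n * V_stat n (Suc k) p (x'(k := j))
      = (\<Sum>i<k. if x' i = 0 then 0 else real (x' i) * ln (real (x' i) / (real n * p i)))
        + (if j = 0 then 0 else real j * ln (real j / (real n * p k)))"
  proof -
    have eqsum: "(\<Sum>i<k. if (x'(k := j)) i = 0 then 0 else real ((x'(k := j)) i) * ln (real ((x'(k := j)) i) / (real n * p i)))
      = (\<Sum>i<k. if x' i = 0 then 0 else real (x' i) * ln (real (x' i) / (real n * p i)))"
      by (rule sum.cong) auto
    show ?thesis unfolding nV_sum[OF n] sum.lessThan_Suc eqsum gk by simp
  qed
  show ?thesis
  proof (cases "m = 0")
    case True
    have "\<forall>i<k. x' i = 0" using cv_le[OF x'] True unfolding m_def by auto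
    then show ?thesis unfolding L T0_def using True unfolding m_def by simp
  next
    case False
    then have mp: "m > 0" by simp
    have sx: "(\<Sum>i<k. x' i) = m" using x' unfolding m_def by (simp add: cv_mem)
    obtain i0 where i0: "i0 < k" "x' i0 \<noteq> 0"
      using sx mp by (metis (no_types, lifting) lessThan_iff neq0_conv sum.neutral)
    have "p i0 \<le> (\<Sum>i<k. p i)" using pnn i0 by (intro member_le_sum) auto
    then have pk1: "1 - p k > 0" using supp[OF i0] psk by simp
    have "(\<Sum>i<k. if x' i = 0 then 0 else real (x' i) * ln (real (x' i) / (real n * p i)))
        = (\<Sum>i<k. (if x' i = 0 then 0 else real (x' i) * ln (real (x' i) / (real m * (p i / (1 - p k)))))
                 + (if x' i = 0 then 0 else real (x' i) * ln (real m / (real n * (1 - p k)))))"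
    proof (rule sum.cong[OF refl])
      fix i assume "i \<in> {..<k}"
      then have i: "i < k" by simp
      show "(if x' i = 0 then 0 else real (x' i) * ln (real (x' i) / (real n * p i)))
         = (if x' i = 0 then 0 else real (x' i) * ln (real (x' i) / (real m * (p i / (1 - p k)))))
           + (if x' i = 0 then 0 else real (x' i) * ln (real m / (real n * (1 - p k))))"
      proof (cases "x' i = 0")
        case False
        have pi: "p i > 0" using supp[OF i False] .
        define A where "A = real (x' i) / (real m * (p i / (1 - p k)))"
        define B where "B = real m / (real n * (1 - p k))"
        have eq: "real (x' i) / (real n * p i) = A * B"
          unfolding A_def B_def using pi pk1 mp n by (simp add: field_simps)
        have "A > 0" unfolding A_def using pi pk1 mp False by simp
        moreover have "B > 0" unfolding B_def using pk1 mp n by simp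
        ultimately have "ln (A * B) = ln A + ln B" by (simp add: ln_mult)
        then have "ln (real (x' i) / (real n * p i)) = ln (real (x' i) / (real m * (p i / (1 - p k)))) + ln (real m / (real n * (1 - p k)))"
          unfolding eq A_def B_def .
        then show ?thesis using False by (simp add: algebra_simps)
      qed simp
    qed
    also have "\<dots> = real m * V_stat m k (\<lambda>i. p i / (1 - p k)) x' + real m * ln (real m / (real n * (1 - p k)))"
      unfolding sum.distrib nV_sum[OF mp] sum_lessThan_mult sx by simp
    finally show ?thesis unfolding L T0_def m_def[symmetric] using mp by simp
  qed
qed

lemma pv_facts:
  assumes "prob_vec (Suc k) p"
  shows "\<forall>i<Suc k. p i \<ge> 0" "(\<Sum>i<k. p i) = 1 - p k" "0 \<le> p k" "p k \<le> 1"
proof -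
  show 1: "\<forall>i<Suc k. p i \<ge> 0" using assms by (simp add: prob_vec_def)
  show 2: "(\<Sum>i<k. p i) = 1 - p k" using assms by (simp add: prob_vec_def)
  show "0 \<le> p k" using 1 by simp
  have "0 \<le> (\<Sum>i<k. p i)" using 1 by (intro sum_nonneg) auto
  then show "p k \<le> 1" using 2 by simp
qed

lemma mass_pv: "prob_vec k p \<Longrightarrow> mult_expect n k p (\<lambda>_. 1) = 1"
  unfolding mult_expect_def prob_vec_def using mass[of n k p] by simp

lemma pmf_zero_vec: "multinomial_pmf 0 k p (\<lambda>i. if i < k then 0 else undefined) = 1"
  unfolding multinomial_pmf_def by simp

lemma V_zero_n: "real 0 * V_stat 0 k p x = 0" by simp

lemma inner:
  assumes pv: "prob_vec (Suc k) p"
    and IH: "\<And>q. prob_vec k q \<Longrightarrow> mult_expect m k q (\<lambda>x. exp (real m * V_stat m k q x / (2 * (real k - 1)))) \<le> 2"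
  shows "(\<Sum>x'\<in>count_vecs m k. multinomial_pmf m k p x' * exp (real m * V_stat m k (\<lambda>i. p i / (1 - p k)) x' / (2 * (real k - 1))))
         \<le> 2 * (1 - p k)^m"
proof -
  note pf = pv_facts[OF pv]
  show ?thesis
  proof (cases "m = 0")
    case True
    then show ?thesis by (simp add: cv_zero pmf_zero_vec)
  next
    case False
    show ?thesis
    proof (cases "p k = 1")
      case True
      then have "(\<Sum>i<k. p i) = 0" using pf(2) by simp
      then have p0: "\<forall>i<k. p i = 0" using pf(1) by (subst (asm) sum_nonneg_eq_0_iff) auto
      have "multinomial_pmf m k p x' = 0" if x': "x' \<in> count_vecs m k" for x'
      proof (rule ccontr)
        assume nz: "multinomial_pmf m k p x' \<noteq> 0"
        have "(\<Sum>i<k. x' i) = m" using x' by (simp add: cv_mem)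
        then obtain i where "i < k" "x' i \<noteq> 0" using False
          by (metis (no_types, lifting) lessThan_iff sum.neutral)
        then show False using pmf_nonzero[OF nz] p0 by auto
      qed
      then show ?thesis using True False by simp
    next
      case False
      define c where "c = 1 - p k"
      have c: "c > 0" unfolding c_def using False pf(4) by simp
      have pvq: "prob_vec k (\<lambda>i. p i / c)"
        unfolding prob_vec_def using pf(1) c pf(2) unfolding c_def
        by (auto simp: sum_divide_distrib[symmetric])
      have "(\<Sum>x'\<in>count_vecs m k. multinomial_pmf m k p x' * exp (real m * V_stat m k (\<lambda>i. p i / (1 - p k)) x' / (2 * (real k - 1))))
          = c^m * mult_expect m k (\<lambda>i. p i / c) (\<lambda>x. exp (real m * V_stat m k (\<lambda>i. p i / c) x / (2 * (real k - 1))))"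
        unfolding mult_expect_def sum_distrib_left c_def[symmetric]
        by (rule sum.cong[OF refl]) (use c in \<open>simp add: pmf_scale\<close>)
      also have "\<dots> \<le> c^m * 2" by (rule mult_left_mono[OF IH[OF pvq]]) (use c in simp)
      finally show ?thesis unfolding c_def by simp
    qed
  qed
qed

lemma V1_zero:
  assumes x': "x' \<in> count_vecs m 1" and q: "q 0 = 1"
  shows "real m * V_stat m 1 q x' = 0"
proof (cases "m = 0")
  case True then show ?thesis by simp
next
  case False
  have "x' 0 = m" using x' by (simp add: cv_mem)
  then show ?thesis unfolding nV_sum[of m, OF _] using False q by (simp add: nV_sum)
qed

lemma termwise:
  assumes pv: "prob_vec (Suc k) p" and k: "k > 0" and n: "n > 0" and j: "j \<le> n"
    and x': "x' \<in> count_vecs (n-j) k"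
  shows "multinomial_pmf n (Suc k) p (x'(k := j)) * exp (real n * V_stat n (Suc k) p (x'(k := j)) / (2 * (real (Suc k) - 1)))
      \<le> multinomial_pmf n (Suc k) p (x'(k := j)) * ((1 / real k) * exp (T0 n (p k) j / 2)
           + ((real k - 1) / real k) * exp (real (n-j) * V_stat (n-j) k (\<lambda>i. p i / (1 - p k)) x' / (2 * (real k - 1))))"
proof (cases "multinomial_pmf n (Suc k) p (x'(k := j)) = 0")
  case True then show ?thesis by simp
next
  case False
  note pf = pv_facts[OF pv]
  have pos: "multinomial_pmf n (Suc k) p (x'(k := j)) \<ge> 0" using pmf_nonneg pf(1) by blast
  define S where "S = real (n-j) * V_stat (n-j) k (\<lambda>i. p i / (1 - p k)) x'"
  define T where "T = T0 n (p k) j"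
  have ch: "real n * V_stat n (Suc k) p (x'(k := j)) = T + S"
    unfolding S_def T_def by (rule chain[OF pv n j x' False])
  have "exp ((T + S) / (2 * real k)) \<le> (1 / real k) * exp (T / 2) + ((real k - 1) / real k) * exp (S / (2 * (real k - 1)))"
  proof (cases "k = 1")
    case True
    have "S = 0"
    proof (cases "n - j = 0")
      case True then show ?thesis unfolding S_def by simp
    next
      case nj: False
      have "(\<Sum>i<1. x' i) = n - j" using x' \<open>k = 1\<close> by (simp add: cv_mem)
      then have "x' 0 \<noteq> 0" using nj by simp
      then have "p 0 \<noteq> 0" using pmf_nonzero[OF False, of 0] \<open>k = 1\<close> by simp
      moreover have "p 0 = 1 - p 1" using pf(2) \<open>k = 1\<close> by simp
      ultimately have "(\<lambda>i. p i / (1 - p k)) 0 = 1" using \<open>k = 1\<close> by simp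
      then show ?thesis unfolding S_def using V1_zero[of x' "n-j"] x' \<open>k = 1\<close> by simp
    qed
    then show ?thesis using True by simp
  next
    case False
    then have k2: "real k - 1 > 0" using k by simp
    have "(T + S) / (2 * real k) = (1 / real k) * (T / 2) + ((real k - 1) / real k) * (S / (2 * (real k - 1)))"
      using k2 k by (simp add: field_simps)
    moreover have "exp ((1 / real k) * (T / 2) + ((real k - 1) / real k) * (S / (2 * (real k - 1))))
        \<le> (1 / real k) * exp (T / 2) + ((real k - 1) / real k) * exp (S / (2 * (real k - 1)))"
      by (rule exp_conv) (use k k2 in \<open>auto simp: field_simps\<close>)
    ultimately show ?thesis by simp
  qed
  then show ?thesis unfolding ch[symmetric] S_def[symmetric] T_def[symmetric]
    using pos by (intro mult_left_mono) auto
qed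

lemma main:
  "prob_vec k p \<Longrightarrow> mult_expect n k p (\<lambda>x. exp (real n * V_stat n k p x / (2 * (real k - 1)))) \<le> 2"
proof (induction k arbitrary: n p)
  case 0
  then show ?case by (simp add: prob_vec_def)
next
  case (Suc k)
  note pv = Suc.prems
  note pf = pv_facts[OF pv]
  show ?case
  proof (cases "n = 0 \<or> k = 0")
    case True
    then have "mult_expect n (Suc k) p (\<lambda>x. exp (real n * V_stat n (Suc k) p x / (2 * (real (Suc k) - 1))))
        = mult_expect n (Suc k) p (\<lambda>_. 1)" by auto
    then show ?thesis using mass_pv[OF pv] by simp
  next
    case False
    then have n: "n > 0" and k: "k > 0" by auto
    define q where "q = (\<lambda>i. p i / (1 - p k))"
    define w where "w j = real (n choose j) * p k ^ j" for j
    define E2 where "E2 j x' = exp (real (n-j) * V_stat (n-j) k q x' / (2 * (real k - 1)))" for j x'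
    have "mult_expect n (Suc k) p (\<lambda>x. exp (real n * V_stat n (Suc k) p x / (2 * (real (Suc k) - 1))))
       = (\<Sum>j\<le>n. \<Sum>x'\<in>count_vecs (n-j) k. multinomial_pmf n (Suc k) p (x'(k := j))
             * exp (real n * V_stat n (Suc k) p (x'(k := j)) / (2 * (real (Suc k) - 1))))"
      unfolding mult_expect_def cv_Suc_sum ..
    also have "\<dots> \<le> (\<Sum>j\<le>n. \<Sum>x'\<in>count_vecs (n-j) k. multinomial_pmf n (Suc k) p (x'(k := j))
             * ((1 / real k) * exp (T0 n (p k) j / 2) + ((real k - 1) / real k) * E2 j x'))"
      unfolding E2_def q_def
      by (intro sum_mono termwise[OF pv k n]) auto
    also have "\<dots> = (\<Sum>j\<le>n. (1 / real k) * (w j * (1 - p k)^(n-j) * exp (T0 n (p k) j / 2))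
           + ((real k - 1) / real k) * (w j * (\<Sum>x'\<in>count_vecs (n-j) k. multinomial_pmf (n-j) k p x' * E2 j x')))"
    proof (rule sum.cong[OF refl])
      fix j assume "j \<in> {..n}"
      then have j: "j \<le> n" by simp
      have "(\<Sum>x'\<in>count_vecs (n-j) k. multinomial_pmf n (Suc k) p (x'(k := j))
             * ((1 / real k) * exp (T0 n (p k) j / 2) + ((real k - 1) / real k) * E2 j x'))
          = (\<Sum>x'\<in>count_vecs (n-j) k. (1 / real k) * exp (T0 n (p k) j / 2) * (w j * multinomial_pmf (n-j) k p x')
              + ((real k - 1) / real k) * (w j * (multinomial_pmf (n-j) k p x' * E2 j x')))"
        by (rule sum.cong[OF refl]) (simp add: pmf_Suc[OF j] w_def algebra_simps)
      also have "\<dots> = (1 / real k) * exp (T0 n (p k) j / 2) * (w j * (\<Sum>x'\<in>count_vecs (n-j) k. multinomial_pmf (n-j) k p x'))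
              + ((real k - 1) / real k) * (w j * (\<Sum>x'\<in>count_vecs (n-j) k. multinomial_pmf (n-j) k p x' * E2 j x'))"
        by (simp add: sum.distrib sum_distrib_left)
      also have "(\<Sum>x'\<in>count_vecs (n-j) k. multinomial_pmf (n-j) k p x') = (1 - p k)^(n-j)"
        using mass[of "n-j" k p] pf(2) by simp
      also have "(1 / real k) * exp (T0 n (p k) j / 2) * (w j * (1 - p k)^(n-j))
              + ((real k - 1) / real k) * (w j * (\<Sum>x'\<in>count_vecs (n-j) k. multinomial_pmf (n-j) k p x' * E2 j x'))
          = (1 / real k) * (w j * (1 - p k)^(n-j) * exp (T0 n (p k) j / 2))
           + ((real k - 1) / real k) * (w j * (\<Sum>x'\<in>count_vecs (n-j) k. multinomial_pmf (n-j) k p x' * E2 j x'))"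
        by (simp only: mult_ac)
      finally show "(\<Sum>x'\<in>count_vecs (n-j) k. multinomial_pmf n (Suc k) p (x'(k := j))
             * ((1 / real k) * exp (T0 n (p k) j / 2) + ((real k - 1) / real k) * E2 j x'))
          = (1 / real k) * (w j * (1 - p k)^(n-j) * exp (T0 n (p k) j / 2))
           + ((real k - 1) / real k) * (w j * (\<Sum>x'\<in>count_vecs (n-j) k. multinomial_pmf (n-j) k p x' * E2 j x'))" .
    qed
    also have "\<dots> \<le> (\<Sum>j\<le>n. (1 / real k) * (w j * (1 - p k)^(n-j) * exp (T0 n (p k) j / 2))
           + ((real k - 1) / real k) * (w j * (2 * (1 - p k)^(n-j))))"
    proof (rule sum_mono)
      fix j assume "j \<in> {..n}"
      have "(\<Sum>x'\<in>count_vecs (n-j) k. multinomial_pmf (n-j) k p x' * E2 j x') \<le> 2 * (1 - p k)^(n-j)"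
        unfolding E2_def q_def by (rule inner[OF pv Suc.IH])
      moreover have "w j \<ge> 0" unfolding w_def using pf(3) by simp
      moreover have "(real k - 1) / real k \<ge> 0" using k by simp
      ultimately have "((real k - 1) / real k) * (w j * (\<Sum>x'\<in>count_vecs (n-j) k. multinomial_pmf (n-j) k p x' * E2 j x'))
           \<le> ((real k - 1) / real k) * (w j * (2 * (1 - p k)^(n-j)))"
        by (intro mult_left_mono) auto
      then show "(1 / real k) * (w j * (1 - p k)^(n-j) * exp (T0 n (p k) j / 2))
           + ((real k - 1) / real k) * (w j * (\<Sum>x'\<in>count_vecs (n-j) k. multinomial_pmf (n-j) k p x' * E2 j x'))
          \<le> (1 / real k) * (w j * (1 - p k)^(n-j) * exp (T0 n (p k) j / 2))
           + ((real k - 1) / real k) * (w j * (2 * (1 - p k)^(n-j)))"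
        by (rule add_left_mono)
    qed
    also have "\<dots> = (1 / real k) * (\<Sum>j\<le>n. real (n choose j) * p k ^ j * (1 - p k)^(n-j) * exp (T0 n (p k) j / 2))
           + ((real k - 1) / real k) * 2 * (\<Sum>j\<le>n. real (n choose j) * p k ^ j * (1 - p k)^(n-j))"
      by (simp add: sum.distrib sum_distrib_left w_def algebra_simps)
    also have "(\<Sum>j\<le>n. real (n choose j) * p k ^ j * (1 - p k)^(n-j)) = 1"
      using binomial_ring[of "p k" "1 - p k" n] by (simp add: mult_ac)
    also have "(1 / real k) * (\<Sum>j\<le>n. real (n choose j) * p k ^ j * (1 - p k)^(n-j) * exp (T0 n (p k) j / 2))
        \<le> (1 / real k) * 2"
      by (rule mult_left_mono[OF binom_mgf[OF pf(3,4)]]) simp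
    then have "(1 / real k) * (\<Sum>j\<le>n. real (n choose j) * p k ^ j * (1 - p k)^(n-j) * exp (T0 n (p k) j / 2))
           + ((real k - 1) / real k) * 2 * 1 \<le> (1 / real k) * 2 + ((real k - 1) / real k) * 2 * 1"
      by simp
    also have "(1 / real k) * 2 + ((real k - 1) / real k) * 2 * 1 = 2"
      using k by (simp add: field_simps)
    finally show ?thesis .
  qed
qed

lemma gibbs:
  assumes pv: "prob_vec k p" and n: "n > 0" and x: "x \<in> count_vecs n k"
    and nz: "multinomial_pmf n k p x \<noteq> 0"
  shows "V_stat n k p x \<ge> 0"
proof -
  have pnn: "\<forall>i<k. p i \<ge> 0" and ps: "(\<Sum>i<k. p i) = 1" using pv by (auto simp: prob_vec_def)
  have sx: "(\<Sum>i<k. x i) = n" using x by (simp add: cv_mem)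
  define q where "q i = real (x i) / real n" for i
  have "(\<Sum>i<k. real (x i)) = real n" using sx by (simp flip: of_nat_sum)
  then have sq: "(\<Sum>i<k. q i) = 1" unfolding q_def using n
    by (simp add: sum_divide_distrib[symmetric])
  have "(\<Sum>i<k. q i - p i) \<le> (\<Sum>i<k. if q i = 0 then 0 else q i * ln (q i / p i))"
  proof (rule sum_mono)
    fix i assume "i \<in> {..<k}"
    then have i: "i < k" by simp
    show "q i - p i \<le> (if q i = 0 then 0 else q i * ln (q i / p i))"
    proof (cases "q i = 0")
      case True then show ?thesis using pnn i by simp
    next
      case False
      then have xi: "x i \<noteq> 0" unfolding q_def by simp
      have "p i \<noteq> 0" using pmf_nonzero[OF nz i xi] .
      then have pi: "p i > 0" using pnn i by force
      have qi: "q i > 0" using False n unfolding q_def by simp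
      have "ln (p i / q i) \<le> p i / q i - 1" by (rule ln_le_minus_one) (use pi qi in simp)
      moreover have "ln (q i / p i) = - ln (p i / q i)" using pi qi by (simp add: ln_div)
      ultimately have "q i * (1 - p i / q i) \<le> q i * ln (q i / p i)"
        using qi by (intro mult_left_mono) auto
      moreover have "q i * (1 - p i / q i) = q i - p i" using qi by (simp add: field_simps)
      ultimately show ?thesis using False by simp
    qed
  qed
  then show ?thesis unfolding V_stat_def KL_div_def q_def[symmetric]
    using sq ps by (simp add: sum_subtractf)
qed

lemma V_k1: "prob_vec 1 p \<Longrightarrow> x \<in> count_vecs n 1 \<Longrightarrow> V_stat n 1 p x = 0"
  unfolding prob_vec_def V_stat_def KL_div_def by (cases "n = 0") (simp_all add: cv_mem)

lemma powr_bound: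
  fixes u m :: real
  assumes u: "u \<ge> 0" and m: "m \<ge> 1"
  shows "u powr m \<le> m powr m * exp (- m) * exp u"
proof (cases "u = 0")
  case True then show ?thesis by simp
next
  case False
  then have up: "u > 0" using u by simp
  have mp: "m > 0" using m by simp
  have "ln (u / m) \<le> u / m - 1" by (rule ln_le_minus_one) (use up mp in simp)
  then have "m * ln (u / m) \<le> m * (u / m - 1)" using mp by (intro mult_left_mono) auto
  moreover have "m * ln (u / m) = m * ln u - m * ln m" using up mp by (simp add: ln_div algebra_simps)
  moreover have "m * (u / m - 1) = u - m" using mp by (simp add: field_simps)
  ultimately have "m * ln u \<le> m * ln m - m + u" by linarith
  then have "exp (m * ln u) \<le> exp (m * ln m + (- m) + u)" by simp
  moreover have "m powr m * exp (- m) * exp u = exp (m * ln m + (- m) + u)"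
    using mp by (simp add: powr_def exp_add exp_diff exp_minus field_simps)
  moreover have "u powr m = exp (m * ln u)" using up by (simp add: powr_def mult.commute)
  ultimately show ?thesis by simp
qed

lemma scaled_powr_bound:
  fixes y t m :: real
  assumes y: "y \<ge> 0" and t: "t > 0" and m: "m \<ge> 1"
  shows "y powr m \<le> (t * m) powr m * exp (- m) * exp (y / t)"
proof -
  have "y powr m = (t * (y / t)) powr m" using t by simp
  also have "\<dots> = t powr m * (y / t) powr m" by (rule powr_mult)
  also have "\<dots> \<le> t powr m * (m powr m * exp (- m) * exp (y / t))"
    by (rule mult_left_mono[OF powr_bound]) (use y t m in auto)
  also have "\<dots> = (t * m) powr m * exp (- m) * exp (y / t)"
    using t m by (simp add: powr_mult)
  finally show ?thesis .
qed

lemma two_exp_le: "(m::real) \<ge> 1 \<Longrightarrow> 2 * exp (- m) \<le> 1"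
proof -
  assume m: "m \<ge> 1"
  have "1 + m \<le> exp m" by (rule exp_ge_add_one_self)
  then have "2 \<le> exp m" using m by linarith
  then show ?thesis by (simp add: exp_minus field_simps)
qed

lemma sq_le:
  fixes w z :: "'a \<Rightarrow> real"
  assumes "finite S" "(\<Sum>i\<in>S. w i) = 1" "\<And>i. i \<in> S \<Longrightarrow> w i \<ge> 0"
  shows "(\<Sum>i\<in>S. w i * z i)^2 \<le> (\<Sum>i\<in>S. w i * (z i)^2)"
proof -
  define c where "c = (\<Sum>i\<in>S. w i * z i)"
  have "0 \<le> (\<Sum>i\<in>S. w i * (z i - c)^2)" using assms(3) by (intro sum_nonneg) auto
  also have "\<dots> = (\<Sum>i\<in>S. w i * (z i)^2) - 2 * c * (\<Sum>i\<in>S. w i * z i) + c^2 * (\<Sum>i\<in>S. w i)"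
  proof -
    have e: "(\<Sum>i\<in>S. w i * c^2) = sum w S * c^2" by (simp add: sum_distrib_right)
    show ?thesis by (simp add: power2_diff algebra_simps sum.distrib sum_subtractf sum_distrib_left e)
  qed
  finally show ?thesis using assms(2) unfolding c_def by (simp add: power2_eq_square)
qed

lemma jensen_exp:
  fixes w y :: "'a \<Rightarrow> real"
  assumes "finite S" "(\<Sum>i\<in>S. w i) = 1" "\<And>i. i \<in> S \<Longrightarrow> w i \<ge> 0"
  shows "exp (\<Sum>i\<in>S. w i * y i) \<le> (\<Sum>i\<in>S. w i * exp (y i))"
proof -
  have "S \<noteq> {}" using assms(2) by auto
  from convex_on_sum[OF assms(1) this exp_convex assms(2) assms(3)]
  show ?thesis by simp
qed

lemma Y_nonneg:
  assumes pv: "prob_vec k p" and n: "n > 0" and x: "x \<in> count_vecs n k"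
    and nz: "multinomial_pmf n k p x \<noteq> 0"
  shows "2 * real n * V_stat n k p x \<ge> 0"
  using gibbs[OF pv n x nz] by simp

lemma pmf_nn: "prob_vec k p \<Longrightarrow> multinomial_pmf n k p x \<ge> 0"
  by (rule pmf_nonneg) (simp add: prob_vec_def)

lemma mass1: "prob_vec k p \<Longrightarrow> (\<Sum>x\<in>count_vecs n k. multinomial_pmf n k p x) = 1"
  using mass[of n k p] by (simp add: prob_vec_def)

lemma facts2:
  assumes pv: "prob_vec k p" and n: "n > 0" and k: "k > 1"
  shows "mult_expect n k p (\<lambda>x. exp (\<bar>2 * real n * V_stat n k p x\<bar> / (4 * (real k - 1)))) \<le> 2"
    and "mult_expect n k p (\<lambda>x. exp (\<bar>2 * real n * V_stat n k p x
              - mult_expect n k p (\<lambda>y. 2 * real n * V_stat n k p y)\<bar> / (8 * (real k - 1)))) \<le> 2"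
proof -
  define Y where "Y x = 2 * real n * V_stat n k p x" for x
  define w where "w x = multinomial_pmf n k p x" for x
  define C where "C = count_vecs n k"
  define \<mu> where "\<mu> = mult_expect n k p Y"
  define t0 where "t0 = 4 * (real k - 1)"
  have t0: "t0 > 0" unfolding t0_def using k by simp
  have fin: "finite C" unfolding C_def by (rule finite_cv)
  have w1: "(\<Sum>x\<in>C. w x) = 1" unfolding C_def w_def by (rule mass1[OF pv])
  have wnn: "w x \<ge> 0" for x unfolding w_def by (rule pmf_nn[OF pv])
  have Ynn: "w x \<noteq> 0 \<Longrightarrow> x \<in> C \<Longrightarrow> Y x \<ge> 0" for x
    unfolding w_def Y_def C_def using Y_nonneg[OF pv n] by blast
  have E0: "(\<Sum>x\<in>C. w x * exp (Y x / t0)) \<le> 2"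
  proof -
    have "(\<Sum>x\<in>C. w x * exp (Y x / t0)) = mult_expect n k p (\<lambda>x. exp (real n * V_stat n k p x / (2 * (real k - 1))))"
      unfolding mult_expect_def C_def w_def Y_def t0_def
    proof (rule sum.cong[OF refl])
      fix x
      have "real k - 1 \<noteq> 0" using k by simp
      then show "multinomial_pmf n k p x * exp (2 * real n * V_stat n k p x / (4 * (real k - 1)))
          = multinomial_pmf n k p x * exp (real n * V_stat n k p x / (2 * (real k - 1)))"
        by (simp add: field_simps del: of_nat_diff)
    qed
    also have "\<dots> \<le> 2" by (rule main[OF pv])
    finally show ?thesis .
  qed
  have E0': "(\<Sum>x\<in>C. w x * exp (\<bar>Y x\<bar> / t0)) = (\<Sum>x\<in>C. w x * exp (Y x / t0))"
  proof (rule sum.cong[OF refl])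
    fix x assume "x \<in> C"
    then show "w x * exp (\<bar>Y x\<bar> / t0) = w x * exp (Y x / t0)"
      using Ynn[of x] by (cases "w x = 0") auto
  qed
  show "mult_expect n k p (\<lambda>x. exp (\<bar>2 * real n * V_stat n k p x\<bar> / (4 * (real k - 1)))) \<le> 2"
    using E0 E0' unfolding mult_expect_def C_def w_def Y_def t0_def by simp
  define Z where "Z x = exp (Y x / (2 * t0))" for x
  have \<mu>nn: "\<mu> \<ge> 0" unfolding \<mu>_def mult_expect_def
  proof (rule sum_nonneg)
    fix x assume "x \<in> count_vecs n k"
    then show "0 \<le> multinomial_pmf n k p x * Y x"
      using Ynn[of x] wnn[of x] unfolding w_def C_def by (cases "multinomial_pmf n k p x = 0") auto
  qed
  have step1: "(\<Sum>x\<in>C. w x * exp (\<bar>Y x - \<mu>\<bar> / (2 * t0))) \<le> (\<Sum>x\<in>C. w x * (exp (\<mu> / (2 * t0)) * Z x))"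
  proof (rule sum_mono)
    fix x assume x: "x \<in> C"
    show "w x * exp (\<bar>Y x - \<mu>\<bar> / (2 * t0)) \<le> w x * (exp (\<mu> / (2 * t0)) * Z x)"
    proof (cases "w x = 0")
      case False
      then have "Y x \<ge> 0" using Ynn x by simp
      then have "\<bar>Y x - \<mu>\<bar> \<le> Y x + \<mu>" using \<mu>nn by simp
      then have "\<bar>Y x - \<mu>\<bar> / (2 * t0) \<le> \<mu> / (2 * t0) + Y x / (2 * t0)"
        using t0 by (simp add: divide_right_mono add_divide_distrib[symmetric])
      then have "exp (\<bar>Y x - \<mu>\<bar> / (2 * t0)) \<le> exp (\<mu> / (2 * t0)) * Z x"
        unfolding Z_def by (simp add: exp_add[symmetric])
      then show ?thesis using wnn[of x] by (rule mult_left_mono)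
    qed simp
  qed
  define EZ where "EZ = (\<Sum>x\<in>C. w x * Z x)"
  have EZnn: "EZ \<ge> 0" unfolding EZ_def Z_def using wnn by (intro sum_nonneg) auto
  have "exp (\<mu> / (2 * t0)) = exp (\<Sum>x\<in>C. w x * (Y x / (2 * t0)))"
    unfolding \<mu>_def mult_expect_def C_def w_def by (simp add: sum_divide_distrib)
  also have "\<dots> \<le> EZ" unfolding EZ_def Z_def by (rule jensen_exp[OF fin w1 wnn])
  finally have j1: "exp (\<mu> / (2 * t0)) \<le> EZ" .
  have "EZ^2 \<le> (\<Sum>x\<in>C. w x * (Z x)^2)" unfolding EZ_def by (rule sq_le[OF fin w1 wnn])
  also have "(\<Sum>x\<in>C. w x * (Z x)^2) = (\<Sum>x\<in>C. w x * exp (Y x / t0))"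
    unfolding Z_def by (rule sum.cong[OF refl]) (use t0 in \<open>simp add: power2_eq_square exp_add[symmetric]\<close>)
  also have "\<dots> \<le> 2" by (rule E0)
  finally have j2: "EZ^2 \<le> 2" .
  have "(\<Sum>x\<in>C. w x * exp (\<bar>Y x - \<mu>\<bar> / (2 * t0))) \<le> exp (\<mu> / (2 * t0)) * EZ"
  proof -
    have "(\<Sum>x\<in>C. w x * (exp (\<mu> / (2 * t0)) * Z x)) = exp (\<mu> / (2 * t0)) * EZ"
      unfolding EZ_def sum_distrib_left by (rule sum.cong[OF refl]) (simp add: mult_ac)
    then show ?thesis using step1 by simp
  qed
  also have "\<dots> \<le> EZ * EZ" by (rule mult_right_mono[OF j1 EZnn])
  also have "\<dots> \<le> 2" using j2 by (simp add: power2_eq_square)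
  finally have "(\<Sum>x\<in>C. w x * exp (\<bar>Y x - \<mu>\<bar> / (2 * t0))) \<le> 2" .
  moreover have "2 * t0 = 8 * (real k - 1)" unfolding t0_def by simp
  ultimately show "mult_expect n k p (\<lambda>x. exp (\<bar>2 * real n * V_stat n k p x
              - mult_expect n k p (\<lambda>y. 2 * real n * V_stat n k p y)\<bar> / (8 * (real k - 1)))) \<le> 2"
    unfolding mult_expect_def C_def w_def Y_def \<mu>_def by simp
qed

lemma psi_le:
  assumes "t > 0" "mult_expect n k p (\<lambda>x. exp (\<bar>Y x\<bar> / t)) \<le> 2"
  shows "psi1_norm n k p Y \<le> t"
  unfolding psi1_norm_def
  by (rule cInf_lower) (use assms in \<open>auto intro: bdd_belowI[of _ 0]\<close>)

lemma psi_zero: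
  assumes pv: "prob_vec k p" and Y0: "\<And>x. x \<in> count_vecs n k \<Longrightarrow> Y x = 0"
  shows "psi1_norm n k p Y = 0"
proof -
  have "mult_expect n k p (\<lambda>x. exp (\<bar>Y x\<bar> / t)) = 1" for t
  proof -
    have "mult_expect n k p (\<lambda>x. exp (\<bar>Y x\<bar> / t)) = mult_expect n k p (\<lambda>_. 1)"
      unfolding mult_expect_def by (rule sum.cong) (auto simp: Y0)
    then show ?thesis using mass_pv[OF pv] by simp
  qed
  then have "{t. t > 0 \<and> mult_expect n k p (\<lambda>x. exp (\<bar>Y x\<bar> / t)) \<le> 2} = {0<..}" by auto
  then show ?thesis unfolding psi1_norm_def by simp
qed

lemma moments_k1:
  assumes pv: "prob_vec k p" and Y0: "\<And>x. x \<in> count_vecs n k \<Longrightarrow> Y x = 0" and m: "m \<ge> 1"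
  shows "mult_expect n k p (\<lambda>x. Y x powr m) = 0"
  unfolding mult_expect_def by (rule sum.neutral) (simp add: Y0)

lemma moment_bound:
  assumes pv: "prob_vec k p" and t: "t > 0" and m: "m \<ge> 1"
    and Ynn: "\<And>x. x \<in> count_vecs n k \<Longrightarrow> multinomial_pmf n k p x \<noteq> 0 \<Longrightarrow> Y x \<ge> 0"
    and E: "mult_expect n k p (\<lambda>x. exp (Y x / t)) \<le> 2"
  shows "mult_expect n k p (\<lambda>x. Y x powr m) \<le> (t * m) powr m"
proof -
  have "mult_expect n k p (\<lambda>x. Y x powr m)
      \<le> (\<Sum>x\<in>count_vecs n k. multinomial_pmf n k p x * ((t * m) powr m * exp (- m) * exp (Y x / t)))"
    unfolding mult_expect_def
  proof (rule sum_mono)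
    fix x assume x: "x \<in> count_vecs n k"
    show "multinomial_pmf n k p x * Y x powr m \<le> multinomial_pmf n k p x * ((t * m) powr m * exp (- m) * exp (Y x / t))"
    proof (cases "multinomial_pmf n k p x = 0")
      case False
      show ?thesis
        by (rule mult_left_mono[OF scaled_powr_bound]) (use Ynn[OF x False] t m pmf_nn[OF pv] in auto)
    qed simp
  qed
  also have "\<dots> = (t * m) powr m * exp (- m) * mult_expect n k p (\<lambda>x. exp (Y x / t))"
    unfolding mult_expect_def sum_distrib_left by (rule sum.cong[OF refl]) (simp add: mult_ac)
  also have "\<dots> \<le> (t * m) powr m * exp (- m) * 2"
    by (rule mult_left_mono[OF E]) simp
  also have "\<dots> = (t * m) powr m * (2 * exp (- m))" by simp
  also have "\<dots> \<le> (t * m) powr m * 1"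
    by (rule mult_left_mono[OF two_exp_le[OF m]]) simp
  finally show ?thesis by simp
qed

theorem theorem3p2:
  shows "(\<forall>n k p. n > 0 \<and> k > 0 \<and> prob_vec k p \<longrightarrow>
            psi1_norm n k p (\<lambda>x. 2 * real n * V_stat n k p x) \<le> 4 * (real k - 1) \<and>
            psi1_norm n k p (\<lambda>x. 2 * real n * V_stat n k p x
                 - mult_expect n k p (\<lambda>y. 2 * real n * V_stat n k p y)) \<le> 8 * (real k - 1))
       \<and> (\<exists>C1 C2. C1 > 0 \<and> C2 > 0 \<and>
            (\<forall>n k p (m::real). n > 0 \<and> k > 0 \<and> prob_vec k p \<and> m \<ge> 1 \<longrightarrow>
               mult_expect n k p (\<lambda>x. (2 * real n * V_stat n k p x) powr m)
                 \<le> (C1 * m * (real k - 1)) powr m \<and>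
               mult_expect n k p (\<lambda>x. \<bar>2 * real n * V_stat n k p x
                 - mult_expect n k p (\<lambda>y. 2 * real n * V_stat n k p y)\<bar> powr m)
                 \<le> (C2 * m * (real k - 1)) powr m))"
proof -
  have k1facts: "(\<forall>x\<in>count_vecs n k. 2 * real n * V_stat n k p x = 0) \<and>
      (\<forall>x\<in>count_vecs n k. 2 * real n * V_stat n k p x - mult_expect n k p (\<lambda>y. 2 * real n * V_stat n k p y) = 0)"
    if pv: "prob_vec k p" and k: "k = 1" for n k p
  proof -
    have V0: "\<forall>x\<in>count_vecs n k. 2 * real n * V_stat n k p x = 0" using V_k1 pv k by auto
    then have "mult_expect n k p (\<lambda>y. 2 * real n * V_stat n k p y) = 0"
      unfolding mult_expect_def by (intro sum.neutral) auto
    then show ?thesis using V0 by simp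
  qed
  have P1: "psi1_norm n k p (\<lambda>x. 2 * real n * V_stat n k p x) \<le> 4 * (real k - 1) \<and>
            psi1_norm n k p (\<lambda>x. 2 * real n * V_stat n k p x
                 - mult_expect n k p (\<lambda>y. 2 * real n * V_stat n k p y)) \<le> 8 * (real k - 1)"
    if n: "n > 0" and k: "k > 0" and pv: "prob_vec k p" for n k p
  proof (cases "k = 1")
    case True
    note kf = k1facts[of k p n, OF pv True]
    have "psi1_norm n k p (\<lambda>x. 2 * real n * V_stat n k p x) = 0"
      by (rule psi_zero[OF pv]) (use kf in auto)
    moreover have "psi1_norm n k p (\<lambda>x. 2 * real n * V_stat n k p x
                 - mult_expect n k p (\<lambda>y. 2 * real n * V_stat n k p y)) = 0"
      by (rule psi_zero[OF pv]) (use kf in auto)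
    ultimately show ?thesis using True by simp
  next
    case False
    then have k2: "k > 1" using k by simp
    note f = facts2[OF pv n k2]
    show ?thesis
    proof
      show "psi1_norm n k p (\<lambda>x. 2 * real n * V_stat n k p x) \<le> 4 * (real k - 1)"
        by (rule psi_le[OF _ f(1)]) (use k2 in simp)
      show "psi1_norm n k p (\<lambda>x. 2 * real n * V_stat n k p x
                 - mult_expect n k p (\<lambda>y. 2 * real n * V_stat n k p y)) \<le> 8 * (real k - 1)"
        by (rule psi_le[OF _ f(2)]) (use k2 in simp)
    qed
  qed
  have P2: "mult_expect n k p (\<lambda>x. (2 * real n * V_stat n k p x) powr m)
                 \<le> (4 * m * (real k - 1)) powr m \<and>
               mult_expect n k p (\<lambda>x. \<bar>2 * real n * V_stat n k p x
                 - mult_expect n k p (\<lambda>y. 2 * real n * V_stat n k p y)\<bar> powr m)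
                 \<le> (8 * m * (real k - 1)) powr m"
    if n: "n > 0" and k: "k > 0" and pv: "prob_vec k p" and m: "m \<ge> 1" for n k p and m :: real
  proof (cases "k = 1")
    case True
    note kf = k1facts[of k p n, OF pv True]
    have "mult_expect n k p (\<lambda>x. (2 * real n * V_stat n k p x) powr m) = 0"
      by (rule moments_k1[OF pv _ m]) (use kf in auto)
    moreover have "mult_expect n k p (\<lambda>x. \<bar>2 * real n * V_stat n k p x
                 - mult_expect n k p (\<lambda>y. 2 * real n * V_stat n k p y)\<bar> powr m) = 0"
      by (rule moments_k1[OF pv _ m]) (use kf in auto)
    ultimately show ?thesis using True by simp
  next
    case False
    then have k2: "k > 1" using k by simp
    note f = facts2[OF pv n k2]
    have t0: "4 * (real k - 1) > 0" "8 * (real k - 1) > 0" using k2 by auto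
    have E1: "mult_expect n k p (\<lambda>x. exp ((2 * real n * V_stat n k p x) / (4 * (real k - 1)))) \<le> 2"
    proof -
      have "mult_expect n k p (\<lambda>x. exp ((2 * real n * V_stat n k p x) / (4 * (real k - 1))))
          = mult_expect n k p (\<lambda>x. exp (\<bar>2 * real n * V_stat n k p x\<bar> / (4 * (real k - 1))))"
        unfolding mult_expect_def
      proof (rule sum.cong[OF refl])
        fix x assume x: "x \<in> count_vecs n k"
        show "multinomial_pmf n k p x * exp ((2 * real n * V_stat n k p x) / (4 * (real k - 1)))
            = multinomial_pmf n k p x * exp (\<bar>2 * real n * V_stat n k p x\<bar> / (4 * (real k - 1)))"
          using Y_nonneg[OF pv n x] by (cases "multinomial_pmf n k p x = 0") auto
      qed
      then show ?thesis using f(1) by simp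
    qed
    have "mult_expect n k p (\<lambda>x. (2 * real n * V_stat n k p x) powr m) \<le> (4 * (real k - 1) * m) powr m"
      by (rule moment_bound[OF pv t0(1) m _ E1]) (use Y_nonneg[OF pv n] in auto)
    moreover have "mult_expect n k p (\<lambda>x. \<bar>2 * real n * V_stat n k p x
                 - mult_expect n k p (\<lambda>y. 2 * real n * V_stat n k p y)\<bar> powr m) \<le> (8 * (real k - 1) * m) powr m"
      by (rule moment_bound[OF pv t0(2) m _ f(2)]) auto
    ultimately show ?thesis by (simp add: mult_ac)
  qed
  show ?thesis
  proof (intro conjI)
    show "\<forall>n k p. n > 0 \<and> k > 0 \<and> prob_vec k p \<longrightarrow>
            psi1_norm n k p (\<lambda>x. 2 * real n * V_stat n k p x) \<le> 4 * (real k - 1) \<and>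
            psi1_norm n k p (\<lambda>x. 2 * real n * V_stat n k p x
                 - mult_expect n k p (\<lambda>y. 2 * real n * V_stat n k p y)) \<le> 8 * (real k - 1)"
      using P1 by blast
    show "\<exists>C1 C2. C1 > 0 \<and> C2 > 0 \<and>
            (\<forall>n k p (m::real). n > 0 \<and> k > 0 \<and> prob_vec k p \<and> m \<ge> 1 \<longrightarrow>
               mult_expect n k p (\<lambda>x. (2 * real n * V_stat n k p x) powr m)
                 \<le> (C1 * m * (real k - 1)) powr m \<and>
               mult_expect n k p (\<lambda>x. \<bar>2 * real n * V_stat n k p x
                 - mult_expect n k p (\<lambda>y. 2 * real n * V_stat n k p y)\<bar> powr m)
                 \<le> (C2 * m * (real k - 1)) powr m)"
      by (rule exI[of _ 4], rule exI[of _ 8]) (use P2 in auto)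
  qed
qed

end
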